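(* Let $T$ be a spanning tree, $\mathbf x\in\mathbb R^V$, and $\mathbf b$ a supply vector, and let $\mathbf f_{T,\mathbf x}$ be the associated tree-defined flow. Then $$\mathrm{gap}(\mathbf f_{T,\mathbf x},\mathbf x)=\frac12\sum_{(i,j)\in T}r(i,j)\cdot\frac{\Delta(C(i,j))^2}{R(C(i,j))^2}.$$
   Context: $G=(V,E)$ is a connected undirected graph with resistances $r(e)>0$; $\mathbf b\in\mathbb R^V$ with $\sum_ib(i)=0$; a $\mathbf b$-flow has net outflow $b(i)$ at every $i$ (with $f(j,i)=-f(i,j)$). $\mathcal E(\mathbf f)=\frac12\sum_e r(e)f(e)^2$, $\mathcal B(\mathbf x)=\mathbf b^\top\mathbf x-\frac12\mathbf x^\top\mathbf L\mathbf x$ with $\mathbf L$ the weighted Laplacian $\sum_{ij\in E}\frac1{r(i,j)}(\mathbf e_i-\mathbf e_j)(\mathbf e_i-\mathbf e_j)^\top$, and $\mathrm{gap}(\mathbf f,\mathbf x)=\mathcal E(\mathbf f)-\mathcal B(\mathbf x)$. Root $T$ and direct tree edges toward the root; for a tree edge $(i,j)$, $C(i,j)$ is the vertex set of the component of $T-ij$ containing $i$. For $C\subset V$: $R(C)=(\sum_{e\in\delta(C)}1/r(e))^{-1}$ with $\delta(C)$ the edges with exactly one endpoint in $C$, $b(C)=\sum_{v\in C}b(v)$, $f(C)=\sum_{kl\in E,\,k\in C,\,l\notin C}\frac{x(k)-x(l)}{r(k,l)}$, and $\Delta(C)=(b(C)-f(C))R(C)$. The tree-defined flow $\mathbf f_{T,\mathbf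 x}$ equals $\frac{x(i)-x(j)}{r(i,j)}$ on non-tree edges and, on tree edges, takes the unique values making it a $\mathbf b$-flow. *)

theory Defs
  imports Complex_Main
begin

definition graph_wf :: "'a set \<Rightarrow> 'a set set \<Rightarrow> bool" where
  "graph_wf V E \<longleftrightarrow> finite V \<and> (\<forall>e\<in>E. \<exists>i j. e = {i, j} \<and> i \<noteq> j \<and> i \<in> V \<and> j \<in> V)"

definition reach :: "'a set set \<Rightarrow> 'a \<Rightarrow> 'a \<Rightarrow> bool" where
  "reach F u v \<longleftrightarrow> (u, v) \<in> {(p, q). {p, q} \<in> F}\<^sup>*"

definition connected_on :: "'a set \<Rightarrow> 'a set set \<Rightarrow> bool" where
  "connected_on V F \<longleftrightarrow> (\<forall>u\<in>V. \<forall>v\<in>V. reach F u v)"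

text \<open>A spanning tree: a set of graph edges connecting all vertices that is minimally
  connected (removing any edge disconnects it), i.e. connected and acyclic.\<close>
definition spanning_tree :: "'a set \<Rightarrow> 'a set set \<Rightarrow> 'a set set \<Rightarrow> bool" where
  "spanning_tree V E T \<longleftrightarrow> T \<subseteq> E \<and> connected_on V T \<and> (\<forall>e\<in>T. \<not> connected_on V (T - {e}))"

definition comp :: "'a set \<Rightarrow> 'a set set \<Rightarrow> 'a \<Rightarrow> 'a set" where
  "comp V F v = {u \<in> V. reach F v u}"

text \<open>For a tree edge e (directed toward the root \<rho>), its tail is the endpoint i not in the
  root's component of T - e; C(i,j) is the component of T - e containing i.\<close>
definition tail_toward_root :: "'a set \<Rightarrow> 'a set set \<Rightarrow> 'a \<Rightarrow> 'a set \<Rightarrow> 'a" where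
  "tail_toward_root V T \<rho> e = (THE i. i \<in> e \<and> i \<notin> comp V (T - {e}) \<rho>)"

definition treeC :: "'a set \<Rightarrow> 'a set set \<Rightarrow> 'a \<Rightarrow> 'a set \<Rightarrow> 'a set" where
  "treeC V T \<rho> e = comp V (T - {e}) (tail_toward_root V T \<rho> e)"

definition cut :: "'a set set \<Rightarrow> 'a set \<Rightarrow> 'a set set" where
  "cut E C = {e \<in> E. card (e \<inter> C) = 1}"

definition Rcut :: "'a set set \<Rightarrow> ('a set \<Rightarrow> real) \<Rightarrow> 'a set \<Rightarrow> real" where
  "Rcut E r C = inverse (\<Sum>e\<in>cut E C. 1 / r e)"

definition bset :: "('a \<Rightarrow> real) \<Rightarrow> 'a set \<Rightarrow> real" where
  "bset b C = (\<Sum>v\<in>C. b v)"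

definition fset :: "'a set \<Rightarrow> 'a set set \<Rightarrow> ('a set \<Rightarrow> real) \<Rightarrow> ('a \<Rightarrow> real) \<Rightarrow> 'a set \<Rightarrow> real" where
  "fset V E r x C = (\<Sum>k\<in>C. \<Sum>l\<in>{l \<in> V - C. {k, l} \<in> E}. (x k - x l) / r {k, l})"

definition Delta :: "'a set \<Rightarrow> 'a set set \<Rightarrow> ('a set \<Rightarrow> real) \<Rightarrow> ('a \<Rightarrow> real) \<Rightarrow> ('a \<Rightarrow> real) \<Rightarrow> 'a set \<Rightarrow> real" where
  "Delta V E r b x C = (bset b C - fset V E r x C) * Rcut E r C"

definition is_bflow :: "'a set \<Rightarrow> 'a set set \<Rightarrow> ('a \<Rightarrow> real) \<Rightarrow> ('a \<Rightarrow> 'a \<Rightarrow> real) \<Rightarrow> bool" where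
  "is_bflow V E b f \<longleftrightarrow> (\<forall>i j. {i, j} \<in> E \<longrightarrow> f j i = - f i j) \<and>
     (\<forall>i\<in>V. (\<Sum>j\<in>{j \<in> V. {i, j} \<in> E}. f i j) = b i)"

text \<open>Tree-defined flow: (x i - x j)/r on non-tree edges, the unique b-flow values on tree
  edges (and 0 on non-edges, which are not part of the flow).\<close>
definition tree_flow :: "'a set \<Rightarrow> 'a set set \<Rightarrow> ('a set \<Rightarrow> real) \<Rightarrow> ('a \<Rightarrow> real) \<Rightarrow> 'a set set \<Rightarrow> ('a \<Rightarrow> real) \<Rightarrow> 'a \<Rightarrow> 'a \<Rightarrow> real" where
  "tree_flow V E r b T x = (THE f. is_bflow V E b f \<and>
     (\<forall>i j. {i, j} \<in> E - T \<longrightarrow> f i j = (x i - x j) / r {i, j}) \<and>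
     (\<forall>i j. {i, j} \<notin> E \<longrightarrow> f i j = 0))"

text \<open>A fixed (arbitrary) orientation of an edge, used to evaluate f(e) and the Laplacian.\<close>
definition orient :: "'a set \<Rightarrow> 'a \<times> 'a" where
  "orient e = (SOME p. e = {fst p, snd p} \<and> fst p \<noteq> snd p)"

definition edge_val :: "('a \<Rightarrow> 'a \<Rightarrow> real) \<Rightarrow> 'a set \<Rightarrow> real" where
  "edge_val f e = f (fst (orient e)) (snd (orient e))"

definition energy :: "'a set set \<Rightarrow> ('a set \<Rightarrow> real) \<Rightarrow> ('a \<Rightarrow> 'a \<Rightarrow> real) \<Rightarrow> real" where
  "energy E r f = 1/2 * (\<Sum>e\<in>E. r e * (edge_val f e)^2)"

text \<open>(e_i - e_j) entry at vertex u, for e = {i,j} oriented as (i,j).\<close>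
definition inc :: "'a set \<Rightarrow> 'a \<Rightarrow> real" where
  "inc e u = (if u = fst (orient e) then 1 else if u = snd (orient e) then -1 else 0)"

definition laplacian :: "'a set set \<Rightarrow> ('a set \<Rightarrow> real) \<Rightarrow> 'a \<Rightarrow> 'a \<Rightarrow> real" where
  "laplacian E r u v = (\<Sum>e\<in>E. (1 / r e) * (inc e u * inc e v))"

definition dual_obj :: "'a set \<Rightarrow> 'a set set \<Rightarrow> ('a set \<Rightarrow> real) \<Rightarrow> ('a \<Rightarrow> real) \<Rightarrow> ('a \<Rightarrow> real) \<Rightarrow> real" where
  "dual_obj V E r b x = (\<Sum>i\<in>V. b i * x i) - 1/2 * (\<Sum>u\<in>V. \<Sum>v\<in>V. x u * laplacian E r u v * x v)"

definition gap :: "'a set \<Rightarrow> 'a set set \<Rightarrow> ('a set \<Rightarrow> real) \<Rightarrow> ('a \<Rightarrow> real) \<Rightarrow> ('a \<Rightarrow> 'a \<Rightarrow> real) \<Rightarrow> ('a \<Rightarrow> real) \<Rightarrow> real" where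
  "gap V E r b f x = energy E r f - dual_obj V E r b x"

end

theory Submission
  imports Defs
begin

lemma reach_refl: "reach F u u" unfolding reach_def by simp

lemma reach_edge: "{u,v} \<in> F \<Longrightarrow> reach F u v"
  unfolding reach_def by (rule r_into_rtrancl) simp

lemma reach_trans: "reach F u v \<Longrightarrow> reach F v w \<Longrightarrow> reach F u w"
  unfolding reach_def by (rule rtrancl_trans)

lemma reach_sym: "reach F u v \<Longrightarrow> reach F v u"
  unfolding reach_def
proof (induction rule: rtrancl_induct)
  case base then show ?case by simp
next
  case (step y z)
  then have "(z, y) \<in> {(p, q). {p, q} \<in> F}" by (simp add: insert_commute)
  then show ?case using step.IH by (rule converse_rtrancl_into_rtrancl)
qed

lemma reach_A: "reach T u v \<Longrightarrow> reach (T-{e}) u v \<or> (\<exists>a\<in>e. reach (T-{e}) a v)"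
  unfolding reach_def
proof (induction rule: rtrancl_induct)
  case base then show ?case by simp
next
  case (step y z)
  show ?case
  proof (cases "{y,z} = e")
    case True then show ?thesis by auto
  next
    case False
    then have "(y,z) \<in> {(p, q). {p, q} \<in> T - {e}}" using step.hyps(2) by simp
    then show ?thesis using step.IH by (meson rtrancl.rtrancl_into_rtrancl)
  qed
qed

lemma reach_B: "reach T u v \<Longrightarrow> reach (T-{e}) u v \<or> (\<exists>a\<in>e. reach (T-{e}) u a)"
  unfolding reach_def
proof (induction rule: rtrancl_induct)
  case base then show ?case by simp
next
  case (step y z)
  show ?case
  proof (cases "{y,z} = e")
    case True then show ?thesis using step.IH by auto
  next
    case False
    then have "(y,z) \<in> {(p, q). {p, q} \<in> T - {e}}" using step.hyps(2) by simp
    then show ?thesis using step.IH by (meson rtrancl.rtrancl_into_rtrancl)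
  qed
qed

lemma wf_edge: "graph_wf V E \<Longrightarrow> {i,j} \<in> E \<Longrightarrow> i \<noteq> j \<and> i \<in> V \<and> j \<in> V"
  unfolding graph_wf_def by (metis doubleton_eq_iff insert_iff)

lemma wf_edgeE: assumes "graph_wf V E" "e \<in> E"
  obtains p q where "e = {p,q}" "p \<noteq> q" "p \<in> V" "q \<in> V"
  using assms unfolding graph_wf_def by blast

lemma wf_finite: "graph_wf V E \<Longrightarrow> finite E"
  unfolding graph_wf_def
  by (metis (no_types, lifting) Pow_iff empty_subsetI finite_Pow_iff finite_subset insert_subset subsetI)

lemma tree_edge_aux:
  assumes wf: "graph_wf V E" and st: "spanning_tree V E T" and rho: "\<rho> \<in> V" and eT: "e \<in> T"
    and e: "e = {t,h}" "t \<noteq> h" "t \<in> V" "h \<in> V"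
    and nt: "\<not> reach (T-{e}) \<rho> t" and rh: "reach (T-{e}) \<rho> h"
  shows "tail_toward_root V T \<rho> e = t \<and> treeC V T \<rho> e = comp V (T-{e}) t \<and>
     t \<in> comp V (T-{e}) t \<and> h \<notin> comp V (T-{e}) t \<and> comp V (T-{e}) t \<subseteq> V \<and>
     (\<forall>k l. {k,l}\<in>T \<longrightarrow> k\<in>comp V (T-{e}) t \<longrightarrow> l\<in>V \<longrightarrow> l\<notin>comp V (T-{e}) t \<longrightarrow> k=t \<and> l=h)"
proof -
  have tl: "tail_toward_root V T \<rho> e = t"
    unfolding tail_toward_root_def
  proof (rule the_equality)
    show "t \<in> e \<and> t \<notin> comp V (T - {e}) \<rho>" using e nt by (auto simp: comp_def)
    fix i assume "i \<in> e \<and> i \<notin> comp V (T - {e}) \<rho>"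
    then show "i = t" using e rh by (auto simp: comp_def)
  qed
  have hn: "h \<notin> comp V (T-{e}) t"
  proof
    assume "h \<in> comp V (T-{e}) t"
    then have "reach (T-{e}) t h" by (simp add: comp_def)
    then have "reach (T-{e}) \<rho> t" using rh by (meson reach_sym reach_trans)
    then show False using nt by simp
  qed
  have cr: "\<forall>k l. {k,l}\<in>T \<longrightarrow> k\<in>comp V (T-{e}) t \<longrightarrow> l\<in>V \<longrightarrow> l\<notin>comp V (T-{e}) t \<longrightarrow> k=t \<and> l=h"
  proof (intro allI impI)
    fix k l assume kl: "{k,l}\<in>T" "k\<in>comp V (T-{e}) t" "l\<in>V" "l\<notin>comp V (T-{e}) t"
    have "{k,l} = e"
    proof (rule ccontr)
      assume "{k,l} \<noteq> e"
      then have "reach (T-{e}) k l" using kl by (intro reach_edge) simp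
      moreover have "reach (T-{e}) t k" using kl(2) by (simp add: comp_def)
      ultimately have "reach (T-{e}) t l" using reach_trans by metis
      then show False using kl(3,4) by (simp add: comp_def)
    qed
    then have "(k = t \<and> l = h) \<or> (k = h \<and> l = t)" using e by (simp add: doubleton_eq_iff)
    then show "k=t \<and> l=h" using kl hn by auto
  qed
  have c1: "treeC V T \<rho> e = comp V (T-{e}) t" by (simp add: treeC_def tl)
  have c2: "t \<in> comp V (T-{e}) t" using e(3) by (simp add: comp_def reach_refl)
  have c3: "comp V (T-{e}) t \<subseteq> V" by (auto simp: comp_def)
  show ?thesis using tl hn cr c1 c2 c3 by (intro conjI)
qed

lemma tree_edge:
  assumes wf: "graph_wf V E" and st: "spanning_tree V E T" and rho: "\<rho> \<in> V" and eT: "e \<in> T"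
  obtains t h where "e = {t,h}" "t \<noteq> h" "t \<in> V" "h \<in> V"
    "tail_toward_root V T \<rho> e = t" "treeC V T \<rho> e = comp V (T-{e}) t"
     "t \<in> comp V (T-{e}) t" "h \<notin> comp V (T-{e}) t" "comp V (T-{e}) t \<subseteq> V"
     "\<forall>k l. {k,l}\<in>T \<longrightarrow> k\<in>comp V (T-{e}) t \<longrightarrow> l\<in>V \<longrightarrow> l\<notin>comp V (T-{e}) t \<longrightarrow> k=t \<and> l=h"
proof -
  have TE: "T \<subseteq> E" and con: "connected_on V T" and mn: "\<not> connected_on V (T-{e})"
    using st eT by (auto simp: spanning_tree_def)
  obtain a b where ab: "e = {a,b}" "a \<noteq> b" "a \<in> V" "b \<in> V" using wf_edgeE[OF wf] eT TE by blast
  let ?F = "T - {e}"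
  have one: "reach ?F \<rho> a \<or> reach ?F \<rho> b"
    using reach_B[of T \<rho> a e] con rho ab unfolding connected_on_def by auto
  have notboth: "\<not> (reach ?F \<rho> a \<and> reach ?F \<rho> b)"
  proof
    assume both: "reach ?F \<rho> a \<and> reach ?F \<rho> b"
    have all: "reach ?F \<rho> v" if "v \<in> V" for v
    proof -
      have "reach T \<rho> v" using con rho that by (simp add: connected_on_def)
      from reach_A[OF this, of e] have "reach ?F \<rho> v \<or> reach ?F a v \<or> reach ?F b v" using ab by simp
      then show ?thesis using both reach_trans[of ?F \<rho> a v] reach_trans[of ?F \<rho> b v] by blast
    qed
    have "connected_on V ?F" unfolding connected_on_def
      using all by (meson reach_sym reach_trans)
    then show False using mn by simp
  qed
  show ?thesis
  proof (cases "reach ?F \<rho> b")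
    case True
    then have "\<not> reach ?F \<rho> a" using notboth by simp
    from tree_edge_aux[OF wf st rho eT ab this True] have H: "tail_toward_root V T \<rho> e = a \<and> treeC V T \<rho> e = comp V (T-{e}) a \<and>
     a \<in> comp V (T-{e}) a \<and> b \<notin> comp V (T-{e}) a \<and> comp V (T-{e}) a \<subseteq> V \<and>
     (\<forall>k l. {k,l}\<in>T \<longrightarrow> k\<in>comp V (T-{e}) a \<longrightarrow> l\<in>V \<longrightarrow> l\<notin>comp V (T-{e}) a \<longrightarrow> k=a \<and> l=b)" .
    show ?thesis apply (rule that[of a b]) using H ab by simp_all
  next
    case False
    then have r: "reach ?F \<rho> a" using one by simp
    have ab': "e = {b,a}" using ab by auto
    have ba: "b \<noteq> a" "b \<in> V" "a \<in> V" using ab by auto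
    from tree_edge_aux[OF wf st rho eT ab' ba False r] have H: "tail_toward_root V T \<rho> e = b \<and> treeC V T \<rho> e = comp V (T-{e}) b \<and>
     b \<in> comp V (T-{e}) b \<and> a \<notin> comp V (T-{e}) b \<and> comp V (T-{e}) b \<subseteq> V \<and>
     (\<forall>k l. {k,l}\<in>T \<longrightarrow> k\<in>comp V (T-{e}) b \<longrightarrow> l\<in>V \<longrightarrow> l\<notin>comp V (T-{e}) b \<longrightarrow> k=b \<and> l=a)" .
    show ?thesis apply (rule that[of b a]) using H ab' ba by simp_all
  qed
qed

lemma sum_antisym_zero:
  fixes f :: "'a \<Rightarrow> 'a \<Rightarrow> real"
  assumes fin: "finite C" and as: "\<forall>i j. {i,j}\<in>E \<longrightarrow> f j i = - f i j"
  shows "(\<Sum>k\<in>C. \<Sum>l\<in>{l\<in>C. {k,l}\<in>E}. f k l) = 0"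
proof -
  let ?g = "\<lambda>k l. if {k,l}\<in>E then f k l else 0"
  have "(\<Sum>k\<in>C. \<Sum>l\<in>{l\<in>C. {k,l}\<in>E}. f k l) = (\<Sum>k\<in>C. \<Sum>l\<in>C. ?g k l)"
    using fin by (simp add: sum.inter_filter)
  also have "\<dots> = (\<Sum>l\<in>C. \<Sum>k\<in>C. ?g k l)" by (rule sum.swap)
  also have "\<dots> = (\<Sum>l\<in>C. \<Sum>k\<in>C. - ?g l k)"
  proof (intro sum.cong refl)
    fix l k
    show "?g k l = - ?g l k"
    proof (cases "{k,l} \<in> E")
      case True
      then have "{l,k} \<in> E" by (simp add: insert_commute)
      moreover have "f l k = - f k l" using as True by blast
      ultimately show ?thesis using True by simp
    next
      case False
      then have "{l,k} \<notin> E" by (simp add: insert_commute)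
      then show ?thesis using False by simp
    qed
  qed
  also have "\<dots> = - (\<Sum>l\<in>C. \<Sum>k\<in>C. ?g l k)" by (simp add: sum_negf)
  finally have "(\<Sum>k\<in>C. \<Sum>l\<in>C. ?g k l) = - (\<Sum>l\<in>C. \<Sum>k\<in>C. ?g l k)"
    using fin by (simp add: sum.inter_filter)
  then have "(\<Sum>k\<in>C. \<Sum>l\<in>C. ?g k l) = 0" by linarith
  then show ?thesis using fin by (simp add: sum.inter_filter)
qed

lemma cut_flow:
  assumes wf: "graph_wf V E" and bf: "is_bflow V E b f" and CV: "C \<subseteq> V"
  shows "bset b C = (\<Sum>k\<in>C. \<Sum>l\<in>{l\<in>V-C. {k,l}\<in>E}. f k l)"
proof -
  have finV: "finite V" using wf by (simp add: graph_wf_def)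
  have finC: "finite C" using finV CV finite_subset by blast
  have as: "\<forall>i j. {i,j}\<in>E \<longrightarrow> f j i = - f i j" using bf by (simp add: is_bflow_def)
  have "bset b C = (\<Sum>k\<in>C. \<Sum>l\<in>{l\<in>V. {k,l}\<in>E}. f k l)"
  proof -
    have cons: "\<forall>i\<in>V. (\<Sum>j\<in>{j \<in> V. {i, j} \<in> E}. f i j) = b i" using bf by (simp add: is_bflow_def)
    show ?thesis unfolding bset_def using cons CV by (intro sum.cong refl) auto
  qed
  also have "\<dots> = (\<Sum>k\<in>C. (\<Sum>l\<in>{l\<in>C. {k,l}\<in>E}. f k l) + (\<Sum>l\<in>{l\<in>V-C. {k,l}\<in>E}. f k l))"
  proof (intro sum.cong refl)
    fix k assume "k \<in> C"
    have "{l\<in>V. {k,l}\<in>E} = {l\<in>C. {k,l}\<in>E} \<union> {l\<in>V-C. {k,l}\<in>E}" using CV by auto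
    then show "(\<Sum>l\<in>{l\<in>V. {k,l}\<in>E}. f k l) = (\<Sum>l\<in>{l\<in>C. {k,l}\<in>E}. f k l) + (\<Sum>l\<in>{l\<in>V-C. {k,l}\<in>E}. f k l)"
      using finV finC by (subst sum.union_disjoint[symmetric]) auto
  qed
  also have "\<dots> = (\<Sum>k\<in>C. \<Sum>l\<in>{l\<in>C. {k,l}\<in>E}. f k l) + (\<Sum>k\<in>C. \<Sum>l\<in>{l\<in>V-C. {k,l}\<in>E}. f k l)"
    by (rule sum.distrib)
  also have "\<dots> = (\<Sum>k\<in>C. \<Sum>l\<in>{l\<in>V-C. {k,l}\<in>E}. f k l)"
    using sum_antisym_zero[OF finC as] by simp
  finally show ?thesis .
qed

definition spec :: "'a set \<Rightarrow> 'a set set \<Rightarrow> ('a set \<Rightarrow> real) \<Rightarrow> ('a \<Rightarrow> real) \<Rightarrow> 'a set set \<Rightarrow> ('a \<Rightarrow> real) \<Rightarrow> ('a \<Rightarrow> 'a \<Rightarrow> real) \<Rightarrow> bool" where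
  "spec V E r b T x f \<longleftrightarrow> is_bflow V E b f \<and>
     (\<forall>i j. {i, j} \<in> E - T \<longrightarrow> f i j = (x i - x j) / r {i, j}) \<and>
     (\<forall>i j. {i, j} \<notin> E \<longrightarrow> f i j = 0)"

lemma tree_edge_value:
  assumes wf: "graph_wf V E" and st: "spanning_tree V E T" and sp: "spec V E r b T x f"
    and e: "e = {t,h}" "t \<noteq> h" "h \<in> V" "e \<in> T"
    and tC: "t \<in> C" and hC: "h \<notin> C" and CV: "C \<subseteq> V"
    and cr: "\<forall>k l. {k,l}\<in>T \<longrightarrow> k\<in>C \<longrightarrow> l\<in>V \<longrightarrow> l\<notin>C \<longrightarrow> k=t \<and> l=h"
  shows "f t h = (x t - x h) / r e + (bset b C - fset V E r x C)"
proof -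
  have TE: "T \<subseteq> E" using st by (simp add: spanning_tree_def)
  have finV: "finite V" using wf by (simp add: graph_wf_def)
  have finC: "finite C" using finV CV finite_subset by blast
  let ?c = "f t h - (x t - x h) / r e"
  have bf: "is_bflow V E b f" using sp by (simp add: spec_def)
  have "bset b C = (\<Sum>k\<in>C. \<Sum>l\<in>{l\<in>V-C. {k,l}\<in>E}. f k l)" by (rule cut_flow[OF wf bf CV])
  also have "\<dots> = (\<Sum>k\<in>C. \<Sum>l\<in>{l\<in>V-C. {k,l}\<in>E}. (x k - x l) / r {k,l} + (if k = t \<and> l = h then ?c else 0))"
  proof (intro sum.cong refl)
    fix k l assume k: "k \<in> C" and l: "l \<in> {l\<in>V-C. {k,l}\<in>E}"
    show "f k l = (x k - x l) / r {k,l} + (if k = t \<and> l = h then ?c else 0)"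
    proof (cases "{k,l} \<in> T")
      case True
      then have "k = t \<and> l = h" using cr k l by auto
      then show ?thesis using e by simp
    next
      case False
      then have "f k l = (x k - x l) / r {k,l}" using sp l by (simp add: spec_def)
      moreover have "\<not> (k = t \<and> l = h)" using False e by auto
      ultimately show ?thesis by auto
    qed
  qed
  also have "\<dots> = fset V E r x C + (\<Sum>k\<in>C. \<Sum>l\<in>{l\<in>V-C. {k,l}\<in>E}. (if k = t \<and> l = h then ?c else 0))"
    unfolding fset_def by (simp add: sum.distrib)
  also have "(\<Sum>k\<in>C. \<Sum>l\<in>{l\<in>V-C. {k,l}\<in>E}. (if k = t \<and> l = h then ?c else 0)) = (\<Sum>k\<in>C. if k = t then ?c else 0)"
  proof (intro sum.cong refl)
    fix k assume "k \<in> C"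
    have hin: "h \<in> {l\<in>V-C. {t,l}\<in>E}" using e hC TE by auto
    have fin: "finite {l\<in>V-C. {k,l}\<in>E}" using finV by simp
    show "(\<Sum>l\<in>{l\<in>V-C. {k,l}\<in>E}. (if k = t \<and> l = h then ?c else 0)) = (if k = t then ?c else 0)"
      using hin fin by (cases "k = t") (simp_all add: sum.delta)
  qed
  also have "\<dots> = ?c" using finC tC by (simp add: sum.delta)
  finally show ?thesis by linarith
qed

definition tflow :: "'a set set \<Rightarrow> ('a \<Rightarrow> 'a \<Rightarrow> real) \<Rightarrow> bool" where
  "tflow T h \<longleftrightarrow> (\<forall>i j. h j i = - h i j) \<and> (\<forall>i j. {i,j} \<notin> T \<longrightarrow> h i j = 0)"

definition outf :: "'a set \<Rightarrow> 'a set set \<Rightarrow> ('a \<Rightarrow> 'a \<Rightarrow> real) \<Rightarrow> 'a \<Rightarrow> real" where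
  "outf V E h i = (\<Sum>j\<in>{j\<in>V. {i,j}\<in>E}. h i j)"

lemma tflow_zero: "tflow T (\<lambda>i j. 0)" by (simp add: tflow_def)

lemma tflow_add: "tflow T h1 \<Longrightarrow> tflow T h2 \<Longrightarrow> tflow T (\<lambda>i j. h1 i j + h2 i j)"
  unfolding tflow_def by (metis add.commute minus_add_distrib add_0)

lemma tflow_scale: "tflow T h1 \<Longrightarrow> tflow T (\<lambda>i j. c * h1 i j)"
  unfolding tflow_def by (metis mult_minus_right mult_zero_right)

lemma outf_add: "outf V E (\<lambda>i j. h1 i j + h2 i j) i = outf V E h1 i + outf V E h2 i"
  unfolding outf_def by (simp add: sum.distrib)

lemma outf_scale: "outf V E (\<lambda>i j. c * h1 i j) i = c * outf V E h1 i"
  unfolding outf_def by (simp add: sum_distrib_left)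

lemma outf_zero: "outf V E (\<lambda>i j. 0) i = 0"
  unfolding outf_def by simp

lemma realizable_edge:
  assumes wf: "graph_wf V E" and TE: "T \<subseteq> E" and uv: "{u,v} \<in> T"
  shows "\<exists>h. tflow T h \<and> (\<forall>i\<in>V. outf V E h i = (if i = u then 1 else 0) - (if i = v then 1 else 0))"
proof -
  have uvE: "{u,v} \<in> E" using uv TE by auto
  have d: "u \<noteq> v" "u \<in> V" "v \<in> V" using wf_edge[OF wf uvE] by auto
  define h where "h = (\<lambda>i j. (if i = u \<and> j = v then 1 else 0) - (if i = v \<and> j = u then (1::real) else 0))"
  have t1: "h j i = - h i j" for i j unfolding h_def by (cases "i = u"; cases "i = v"; cases "j = u"; cases "j = v") simp_all
  have t2: "h i j = 0" if "{i,j} \<notin> T" for i j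
  proof -
    have a: "\<not> (i = u \<and> j = v)" using that uv by auto
    have b: "\<not> (i = v \<and> j = u)" using that uv by (auto simp: insert_commute)
    show ?thesis unfolding h_def by (subst if_not_P[OF a], subst if_not_P[OF b]) simp
  qed
  have "tflow T h" unfolding tflow_def using t1 t2 by blast
  moreover have "outf V E h i = (if i = u then 1 else 0) - (if i = v then 1 else 0)" if "i \<in> V" for i
  proof -
    have finS: "finite {j\<in>V. {i,j}\<in>E}" using wf by (simp add: graph_wf_def)
    have vu: "{v,u} \<in> E" using uvE by (simp add: insert_commute)
    have s1: "(\<Sum>j\<in>{j\<in>V. {i,j}\<in>E}. (if i = u \<and> j = v then 1 else 0)) = (if i = u then (1::real) else 0)"
      using finS d uvE by (cases "i = u") (simp_all add: sum.delta)
    have s2: "(\<Sum>j\<in>{j\<in>V. {i,j}\<in>E}. (if i = v \<and> j = u then 1 else 0)) = (if i = v then (1::real) else 0)"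
      using finS d vu by (cases "i = v") (simp_all add: sum.delta)
    show ?thesis unfolding outf_def h_def using s1 s2 by (simp add: sum_subtractf)
  qed
  ultimately show ?thesis by blast
qed

lemma realizable_reach:
  assumes wf: "graph_wf V E" and TE: "T \<subseteq> E" and r: "reach T u v"
  shows "\<exists>h. tflow T h \<and> (\<forall>i\<in>V. outf V E h i = (if i = u then 1 else 0) - (if i = v then 1 else 0))"
  using r unfolding reach_def
proof (induction rule: rtrancl_induct)
  case base
  show ?case using tflow_zero outf_zero by fastforce
next
  case (step y z)
  from step.IH obtain h1 where h1: "tflow T h1" "\<forall>i\<in>V. outf V E h1 i = (if i = u then 1 else 0) - (if i = y then 1 else 0)" by blast
  from step.hyps(2) have "{y,z} \<in> T" by simp
  from realizable_edge[OF wf TE this] obtain h2 where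
    h2: "tflow T h2" "\<forall>i\<in>V. outf V E h2 i = (if i = y then 1 else 0) - (if i = z then 1 else 0)" by blast
  have "tflow T (\<lambda>i j. h1 i j + h2 i j)" using h1 h2 by (simp add: tflow_add)
  moreover have "\<forall>i\<in>V. outf V E (\<lambda>i j. h1 i j + h2 i j) i = (if i = u then 1 else 0) - (if i = z then 1 else 0)"
    using h1(2) h2(2) by (simp add: outf_add)
  ultimately show ?case by blast
qed

lemma realizable_sum:
  assumes fin: "finite A"
    and H: "\<forall>a\<in>A. \<exists>h. tflow T h \<and> (\<forall>i\<in>V. outf V E h i = D a i)"
  shows "\<exists>h. tflow T h \<and> (\<forall>i\<in>V. outf V E h i = (\<Sum>a\<in>A. c a * D a i))"
  using fin H
proof (induction A rule: finite_induct)
  case empty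
  show ?case using tflow_zero outf_zero by fastforce
next
  case (insert a A)
  from insert.IH insert.prems obtain h2 where h2: "tflow T h2" "\<forall>i\<in>V. outf V E h2 i = (\<Sum>a\<in>A. c a * D a i)" by blast
  from insert.prems obtain h1 where h1: "tflow T h1" "\<forall>i\<in>V. outf V E h1 i = D a i" by blast
  have "tflow T (\<lambda>i j. c a * h1 i j + h2 i j)" using h1 h2 tflow_add tflow_scale by fast
  moreover have "\<forall>i\<in>V. outf V E (\<lambda>i j. c a * h1 i j + h2 i j) i = (\<Sum>a\<in>insert a A. c a * D a i)"
    using h1(2) h2(2) insert.hyps by (simp add: outf_add outf_scale)
  ultimately show ?case by blast
qed

lemma flow_exists:
  assumes wf: "graph_wf V E" and st: "spanning_tree V E T" and rho: "\<rho> \<in> V"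
    and bs: "(\<Sum>i\<in>V. b i) = 0"
  shows "\<exists>f. spec V E r b T x f"
proof -
  have TE: "T \<subseteq> E" and con: "connected_on V T" using st by (auto simp: spanning_tree_def)
  have finV: "finite V" using wf by (simp add: graph_wf_def)
  define g0 where "g0 = (\<lambda>i j. if {i,j} \<in> E \<and> {i,j} \<notin> T then (x i - x j) / r {i,j} else 0)"
  have g0as: "g0 j i = - g0 i j" for i j
    unfolding g0_def by (simp add: insert_commute minus_divide_left)
  define d where "d = (\<lambda>i. b i - outf V E g0 i)"
  have "(\<Sum>i\<in>V. outf V E g0 i) = 0"
  proof -
    have "\<forall>i j. {i,j}\<in>E \<longrightarrow> g0 j i = - g0 i j" using g0as by blast
    from sum_antisym_zero[OF finV this] show ?thesis unfolding outf_def .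
  qed
  then have dsum: "(\<Sum>i\<in>V. d i) = 0" unfolding d_def using bs by (simp add: sum_subtractf)
  have "\<forall>v\<in>V. \<exists>h. tflow T h \<and> (\<forall>i\<in>V. outf V E h i = (if i = v then 1 else 0) - (if i = \<rho> then 1 else 0))"
    using realizable_reach[OF wf TE] con rho by (simp add: connected_on_def)
  from realizable_sum[OF finV this, of d] obtain h where
    h: "tflow T h" "\<forall>i\<in>V. outf V E h i = (\<Sum>v\<in>V. d v * ((if i = v then 1 else 0) - (if i = \<rho> then 1 else 0)))"
    by blast
  have hout: "outf V E h i = d i" if "i \<in> V" for i
  proof -
    have "(\<Sum>v\<in>V. d v * ((if i = v then 1 else 0) - (if i = \<rho> then 1 else 0)))
        = (\<Sum>v\<in>V. (if i = v then d v else 0)) - (\<Sum>v\<in>V. d v) * (if i = \<rho> then 1 else 0)"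
    proof -
      have "(\<Sum>v\<in>V. d v * ((if i = v then 1 else 0) - (if i = \<rho> then 1 else 0)))
          = (\<Sum>v\<in>V. (if i = v then d v else 0) - d v * (if i = \<rho> then 1 else 0))"
        by (intro sum.cong refl) (simp add: right_diff_distrib)
      also have "\<dots> = (\<Sum>v\<in>V. (if i = v then d v else 0)) - (\<Sum>v\<in>V. d v * (if i = \<rho> then 1 else 0))"
        by (rule sum_subtractf)
      also have "(\<Sum>v\<in>V. d v * (if i = \<rho> then 1 else 0)) = (\<Sum>v\<in>V. d v) * (if i = \<rho> then 1 else 0)"
        by (rule sum_distrib_right[symmetric])
      finally show ?thesis .
    qed
    also have "\<dots> = d i" using finV that dsum by (simp add: sum.delta)
    finally show ?thesis using h(2) that by simp
  qed
  define f where "f = (\<lambda>i j. g0 i j + h i j)"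
  have has: "h j i = - h i j" for i j using h(1) unfolding tflow_def by blast
  have h0: "{i,j} \<notin> T \<Longrightarrow> h i j = 0" for i j using h(1) unfolding tflow_def by blast
  have "is_bflow V E b f"
    unfolding is_bflow_def
  proof (intro conjI allI impI ballI)
    fix i j show "f j i = - f i j" unfolding f_def using g0as[of i j] has[of i j] by simp
  next
    fix i assume "i \<in> V"
    have "outf V E f i = outf V E g0 i + outf V E h i" unfolding f_def by (rule outf_add)
    also have "\<dots> = b i" using hout[OF \<open>i \<in> V\<close>] by (simp add: d_def)
    finally show "(\<Sum>j\<in>{j \<in> V. {i, j} \<in> E}. f i j) = b i" by (simp add: outf_def)
  qed
  moreover have "\<forall>i j. {i, j} \<in> E - T \<longrightarrow> f i j = (x i - x j) / r {i, j}"
    using h0 by (simp add: f_def g0_def)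
  moreover have "\<forall>i j. {i, j} \<notin> E \<longrightarrow> f i j = 0"
    using h0 TE by (auto simp: f_def g0_def)
  ultimately show ?thesis unfolding spec_def by blast
qed

lemma orient_prop: "i \<noteq> j \<Longrightarrow> {i,j} = {fst (orient {i,j}), snd (orient {i,j})} \<and> fst (orient {i,j}) \<noteq> snd (orient {i,j})"
  unfolding orient_def
  by (rule someI_ex[of "\<lambda>p. {i,j} = {fst p, snd p} \<and> fst p \<noteq> snd p"]) (rule exI[of _ "(i,j)"], simp)

lemma orient_cases: "i \<noteq> j \<Longrightarrow> orient {i,j} = (i,j) \<or> orient {i,j} = (j,i)"
  using orient_prop[of i j] by (metis doubleton_eq_iff prod.collapse)

lemma orientE:
  assumes wf: "graph_wf V E" and e: "e \<in> E"
  obtains p q where "orient e = (p,q)" "e = {p,q}" "p \<noteq> q" "p \<in> V" "q \<in> V"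
proof -
  obtain a b where ab: "e = {a,b}" "a \<noteq> b" "a \<in> V" "b \<in> V" using wf_edgeE[OF wf e] by blast
  from orient_cases[OF ab(2)] show ?thesis
  proof
    assume "orient {a,b} = (a,b)" then show ?thesis using that[of a b] ab by simp
  next
    assume "orient {a,b} = (b,a)" then show ?thesis using that[of b a] ab by (simp add: insert_commute)
  qed
qed

lemma inc_sum:
  assumes fin: "finite V" and o: "orient e = (p,q)" "p \<noteq> q" "p \<in> V" "q \<in> V"
  shows "(\<Sum>i\<in>V. x i * inc e i) = x p - x q"
proof -
  have "(\<Sum>i\<in>V. x i * inc e i) = (\<Sum>i\<in>V. (if i = p then x i else 0) - (if i = q then x i else 0))"
    using o by (intro sum.cong refl) (auto simp: inc_def)
  also have "\<dots> = x p - x q" using fin o by (simp add: sum_subtractf sum.delta)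
  finally show ?thesis .
qed

lemma inc_val:
  assumes "i \<noteq> j" and as: "f j i = - f i j"
  shows "inc {i,j} i * edge_val f {i,j} = f i j"
  using orient_cases[OF assms(1)] proof
  assume "orient {i,j} = (i,j)" then show ?thesis by (simp add: inc_def edge_val_def)
next
  assume "orient {i,j} = (j,i)" then show ?thesis using assms by (simp add: inc_def edge_val_def)
qed

lemma reindex_vertex_edge:
  assumes wf: "graph_wf V E" and i: "i \<in> V"
  shows "(\<Sum>j\<in>{j\<in>V. {i,j}\<in>E}. G {i,j}) = (\<Sum>e\<in>{e\<in>E. i\<in>e}. G e)"
proof (rule sum.reindex_bij_betw)
  show "bij_betw (\<lambda>j. {i,j}) {j\<in>V. {i,j}\<in>E} {e\<in>E. i\<in>e}"
    unfolding bij_betw_def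
  proof
    show "inj_on (\<lambda>j. {i,j}) {j\<in>V. {i,j}\<in>E}"
    proof (rule inj_onI)
      fix j j' assume a: "j \<in> {j\<in>V. {i,j}\<in>E}" "j' \<in> {j\<in>V. {i,j}\<in>E}" "{i,j} = {i,j'}"
      have "i \<noteq> j" using wf_edge[OF wf] a(1) by blast
      then show "j = j'" using a(3) by (metis doubleton_eq_iff)
    qed
    show "(\<lambda>j. {i,j}) ` {j\<in>V. {i,j}\<in>E} = {e\<in>E. i\<in>e}"
    proof
      show "(\<lambda>j. {i,j}) ` {j\<in>V. {i,j}\<in>E} \<subseteq> {e\<in>E. i\<in>e}" by auto
      show "{e\<in>E. i\<in>e} \<subseteq> (\<lambda>j. {i,j}) ` {j\<in>V. {i,j}\<in>E}"
      proof
        fix e assume e: "e \<in> {e\<in>E. i\<in>e}"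
        obtain a b where ab: "e = {a,b}" "a \<noteq> b" "a \<in> V" "b \<in> V" using wf_edgeE[OF wf] e by blast
        show "e \<in> (\<lambda>j. {i,j}) ` {j\<in>V. {i,j}\<in>E}"
        proof (cases "i = a")
          case True then show ?thesis using ab e by auto
        next
          case False then have "i = b" using ab e by auto
          then have "e = {i,a}" using ab by auto
          then show ?thesis using ab e by auto
        qed
      qed
    qed
  qed
qed

lemma bx:
  assumes wf: "graph_wf V E" and bf: "is_bflow V E b f"
  shows "(\<Sum>i\<in>V. b i * x i) = (\<Sum>e\<in>E. edge_val f e * (x (fst (orient e)) - x (snd (orient e))))"
proof -
  have finV: "finite V" using wf by (simp add: graph_wf_def)
  have finE: "finite E" using wf_finite[OF wf] .
  have as: "\<forall>i j. {i,j}\<in>E \<longrightarrow> f j i = - f i j" using bf by (simp add: is_bflow_def)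
  have cons: "\<forall>i\<in>V. (\<Sum>j\<in>{j \<in> V. {i, j} \<in> E}. f i j) = b i" using bf by (simp add: is_bflow_def)
  have bi: "b i = (\<Sum>e\<in>E. inc e i * edge_val f e)" if i: "i \<in> V" for i
  proof -
    have "b i = (\<Sum>j\<in>{j \<in> V. {i, j} \<in> E}. f i j)" using cons i by simp
    also have "\<dots> = (\<Sum>j\<in>{j \<in> V. {i, j} \<in> E}. inc {i,j} i * edge_val f {i,j})"
    proof (intro sum.cong refl)
      fix j assume j: "j \<in> {j \<in> V. {i, j} \<in> E}"
      then have "i \<noteq> j" using wf_edge[OF wf] by blast
      moreover have "f j i = - f i j" using as j by blast
      ultimately show "f i j = inc {i,j} i * edge_val f {i,j}" using inc_val by metis
    qed
    also have "\<dots> = (\<Sum>e\<in>{e\<in>E. i\<in>e}. inc e i * edge_val f e)"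
      by (rule reindex_vertex_edge[OF wf i])
    also have "\<dots> = (\<Sum>e\<in>E. inc e i * edge_val f e)"
    proof (rule sum.mono_neutral_left[OF finE])
      show "{e\<in>E. i\<in>e} \<subseteq> E" by auto
      show "\<forall>e\<in>E - {e\<in>E. i\<in>e}. inc e i * edge_val f e = 0"
      proof
        fix e assume e: "e \<in> E - {e\<in>E. i\<in>e}"
        obtain p q where pq: "orient e = (p,q)" "e = {p,q}" using orientE[OF wf] e by blast
        then have "inc e i = 0" using e by (auto simp: inc_def)
        then show "inc e i * edge_val f e = 0" by simp
      qed
    qed
    finally show ?thesis .
  qed
  have "(\<Sum>i\<in>V. b i * x i) = (\<Sum>i\<in>V. \<Sum>e\<in>E. edge_val f e * (x i * inc e i))"
    using bi by (simp add: sum_distrib_left mult_ac)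
  also have "\<dots> = (\<Sum>e\<in>E. \<Sum>i\<in>V. edge_val f e * (x i * inc e i))" by (rule sum.swap)
  also have "\<dots> = (\<Sum>e\<in>E. edge_val f e * (x (fst (orient e)) - x (snd (orient e))))"
  proof (intro sum.cong refl)
    fix e assume e: "e \<in> E"
    obtain p q where pq: "orient e = (p,q)" "e = {p,q}" "p \<noteq> q" "p \<in> V" "q \<in> V" using orientE[OF wf e] by blast
    show "(\<Sum>i\<in>V. edge_val f e * (x i * inc e i)) = edge_val f e * (x (fst (orient e)) - x (snd (orient e)))"
      using inc_sum[OF finV pq(1,3,4,5), of x] pq(1) by (simp add: sum_distrib_left[symmetric])
  qed
  finally show ?thesis .
qed

lemma lap:
  assumes wf: "graph_wf V E"
  shows "(\<Sum>u\<in>V. \<Sum>v\<in>V. x u * laplacian E r u v * x v) = (\<Sum>e\<in>E. (1 / r e) * (x (fst (orient e)) - x (snd (orient e)))^2)"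
proof -
  have finV: "finite V" using wf by (simp add: graph_wf_def)
  have "(\<Sum>u\<in>V. \<Sum>v\<in>V. x u * laplacian E r u v * x v) = (\<Sum>u\<in>V. \<Sum>v\<in>V. \<Sum>e\<in>E. (1 / r e) * ((x u * inc e u) * (x v * inc e v)))"
    unfolding laplacian_def by (simp add: sum_distrib_left sum_distrib_right mult_ac)
  also have "\<dots> = (\<Sum>u\<in>V. \<Sum>e\<in>E. \<Sum>v\<in>V. (1 / r e) * ((x u * inc e u) * (x v * inc e v)))"
    by (intro sum.cong refl sum.swap)
  also have "\<dots> = (\<Sum>e\<in>E. \<Sum>u\<in>V. \<Sum>v\<in>V. (1 / r e) * ((x u * inc e u) * (x v * inc e v)))"
    by (rule sum.swap)
  also have "\<dots> = (\<Sum>e\<in>E. (1 / r e) * ((\<Sum>u\<in>V. x u * inc e u) * (\<Sum>v\<in>V. x v * inc e v)))"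
    by (simp add: sum_distrib_left sum_distrib_right mult_ac)
  also have "\<dots> = (\<Sum>e\<in>E. (1 / r e) * (x (fst (orient e)) - x (snd (orient e)))^2)"
  proof (intro sum.cong refl)
    fix e assume e: "e \<in> E"
    obtain p q where pq: "orient e = (p,q)" "e = {p,q}" "p \<noteq> q" "p \<in> V" "q \<in> V" using orientE[OF wf e] by blast
    show "(1 / r e) * ((\<Sum>u\<in>V. x u * inc e u) * (\<Sum>v\<in>V. x v * inc e v)) = (1 / r e) * (x (fst (orient e)) - x (snd (orient e)))^2"
      using inc_sum[OF finV pq(1,3,4,5), of x] pq(1) by (simp add: power2_eq_square)
  qed
  finally show ?thesis .
qed

lemma spec_unique:
  assumes wf: "graph_wf V E" and st: "spanning_tree V E T" and rho: "\<rho> \<in> V"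
    and s1: "spec V E r b T x f1" and s2: "spec V E r b T x f2"
  shows "f1 = f2"
proof (intro ext)
  fix i j
  have TE: "T \<subseteq> E" using st by (simp add: spanning_tree_def)
  show "f1 i j = f2 i j"
  proof (cases "{i,j} \<in> E")
    case False then show ?thesis using s1 s2 by (simp add: spec_def)
  next
    case E: True
    show ?thesis
    proof (cases "{i,j} \<in> T")
      case False then show ?thesis using s1 s2 E by (simp add: spec_def)
    next
      case True
      obtain t h where th: "{i,j} = {t,h}" "t \<noteq> h" "t \<in> V" "h \<in> V"
        "tail_toward_root V T \<rho> {i,j} = t" "treeC V T \<rho> {i,j} = comp V (T-{{i,j}}) t"
        "t \<in> comp V (T-{{i,j}}) t" "h \<notin> comp V (T-{{i,j}}) t" "comp V (T-{{i,j}}) t \<subseteq> V"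
        "\<forall>k l. {k,l}\<in>T \<longrightarrow> k\<in>comp V (T-{{i,j}}) t \<longrightarrow> l\<in>V \<longrightarrow> l\<notin>comp V (T-{{i,j}}) t \<longrightarrow> k=t \<and> l=h"
        by (rule tree_edge[OF wf st rho True])
      have v1: "f1 t h = f2 t h"
        using tree_edge_value[OF wf st s1 th(1,2,4) True th(7,8,9,10)]
          tree_edge_value[OF wf st s2 th(1,2,4) True th(7,8,9,10)] by simp
      have the: "{t,h} \<in> E" using E th(1) by simp
      have a1: "f1 h t = - f1 t h" using s1 the unfolding spec_def is_bflow_def by blast
      have a2: "f2 h t = - f2 t h" using s2 the unfolding spec_def is_bflow_def by blast
      from th(1) have "(i = t \<and> j = h) \<or> (i = h \<and> j = t)" by (simp add: doubleton_eq_iff)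
      then show ?thesis using v1 a1 a2 by auto
    qed
  qed
qed

lemma tree_flow_spec:
  assumes wf: "graph_wf V E" and st: "spanning_tree V E T" and rho: "\<rho> \<in> V"
    and bs: "(\<Sum>i\<in>V. b i) = 0"
  shows "spec V E r b T x (tree_flow V E r b T x)"
proof -
  have eq: "tree_flow V E r b T x = (THE f. spec V E r b T x f)"
    by (simp add: tree_flow_def spec_def)
  have "\<exists>!f. spec V E r b T x f"
    using flow_exists[OF wf st rho bs] spec_unique[OF wf st rho] by blast
  then show ?thesis unfolding eq by (rule theI')
qed

theorem mainTheorem11:
  fixes V :: "'a set" and E T :: "'a set set" and r :: "'a set \<Rightarrow> real"
    and b x :: "'a \<Rightarrow> real" and \<rho> :: 'a
  assumes "graph_wf V E"
    and "connected_on V E"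
    and "\<forall>e\<in>E. r e > 0"
    and "(\<Sum>i\<in>V. b i) = 0"
    and "\<rho> \<in> V"
    and "spanning_tree V E T"
  shows "gap V E r b (tree_flow V E r b T x) x =
    1/2 * (\<Sum>e\<in>T. r e * (Delta V E r b x (treeC V T \<rho> e))^2 / (Rcut E r (treeC V T \<rho> e))^2)"
proof -
  note wf = assms(1) and rpos = assms(3) and bs = assms(4) and rho = assms(5) and st = assms(6)
  define f where "f = tree_flow V E r b T x"
  have sp: "spec V E r b T x f" unfolding f_def by (rule tree_flow_spec[OF wf st rho bs])
  have bf: "is_bflow V E b f" using sp by (simp add: spec_def)
  have TE: "T \<subseteq> E" using st by (simp add: spanning_tree_def)
  have finE: "finite E" by (rule wf_finite[OF wf])
  have finT: "finite T" using finE TE finite_subset by blast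
  let ?d = "\<lambda>e. x (fst (orient e)) - x (snd (orient e))"
  let ?F = "\<lambda>e. r e * (Delta V E r b x (treeC V T \<rho> e))^2 / (Rcut E r (treeC V T \<rho> e))^2"
  have "gap V E r b f x = 1/2 * (\<Sum>e\<in>E. r e * (edge_val f e)^2)
      - ((\<Sum>e\<in>E. edge_val f e * ?d e) - 1/2 * (\<Sum>e\<in>E. (1 / r e) * (?d e)^2))"
    unfolding gap_def energy_def dual_obj_def bx[OF wf bf, of x] lap[OF wf, of x r] by (rule refl)
  also have "\<dots> = (\<Sum>e\<in>E. 1/2 * r e * (edge_val f e - ?d e / r e)^2)"
  proof -
    have "(\<Sum>e\<in>E. 1/2 * r e * (edge_val f e - ?d e / r e)^2)
       = (\<Sum>e\<in>E. 1/2 * (r e * (edge_val f e)^2) - (edge_val f e * ?d e) + 1/2 * ((1 / r e) * (?d e)^2))"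
    proof (intro sum.cong refl)
      fix e assume "e \<in> E"
      then have "r e > 0" using rpos by blast
      then show "1/2 * r e * (edge_val f e - ?d e / r e)^2
         = 1/2 * (r e * (edge_val f e)^2) - (edge_val f e * ?d e) + 1/2 * ((1 / r e) * (?d e)^2)"
        by (simp add: field_simps power2_eq_square)
    qed
    also have "\<dots> = 1/2 * (\<Sum>e\<in>E. r e * (edge_val f e)^2)
      - ((\<Sum>e\<in>E. edge_val f e * ?d e) - 1/2 * (\<Sum>e\<in>E. (1 / r e) * (?d e)^2))"
    proof -
      have "(\<Sum>e\<in>E. 1/2 * (r e * (edge_val f e)^2) - (edge_val f e * ?d e) + 1/2 * ((1 / r e) * (?d e)^2))
         = (\<Sum>e\<in>E. 1/2 * (r e * (edge_val f e)^2)) - (\<Sum>e\<in>E. edge_val f e * ?d e) + (\<Sum>e\<in>E. 1/2 * ((1 / r e) * (?d e)^2))"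
        by (simp only: sum.distrib sum_subtractf)
      then show ?thesis by (simp only: sum_distrib_left[symmetric])
    qed
    finally show ?thesis by linarith
  qed
  also have "\<dots> = (\<Sum>e\<in>E. if e \<in> T then 1/2 * ?F e else 0)"
  proof (intro sum.cong refl)
    fix e assume eE: "e \<in> E"
    have re: "r e > 0" using rpos eE by blast
    obtain p q where pq: "orient e = (p,q)" "e = {p,q}" "p \<noteq> q" "p \<in> V" "q \<in> V"
      using orientE[OF wf eE] by blast
    show "1/2 * r e * (edge_val f e - ?d e / r e)^2 = (if e \<in> T then 1/2 * ?F e else 0)"
    proof (cases "e \<in> T")
      case False
      then have "f p q = (x p - x q) / r {p,q}" using sp eE pq(2) by (simp add: spec_def)
      then show ?thesis using False pq by (simp add: edge_val_def)
    next
      case True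
      obtain t h where th: "e = {t,h}" "t \<noteq> h" "t \<in> V" "h \<in> V" "tail_toward_root V T \<rho> e = t" "treeC V T \<rho> e = comp V (T-{e}) t"
        "t \<in> comp V (T-{e}) t" "h \<notin> comp V (T-{e}) t" "comp V (T-{e}) t \<subseteq> V"
        "\<forall>k l. {k,l}\<in>T \<longrightarrow> k\<in>comp V (T-{e}) t \<longrightarrow> l\<in>V \<longrightarrow> l\<notin>comp V (T-{e}) t \<longrightarrow> k=t \<and> l=h"
        by (rule tree_edge[OF wf st rho True])
      define C where "C = comp V (T-{e}) t"
      have tC: "treeC V T \<rho> e = C" using th(6) C_def by simp
      have val: "f t h = (x t - x h) / r e + (bset b C - fset V E r x C)"
        using tree_edge_value[OF wf st sp th(1,2,4) True th(7,8,9,10)] unfolding C_def .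
      have ecut: "e \<in> cut E C"
      proof -
        have "e \<inter> C = {t}" using th(1,7,8) C_def by auto
        then show ?thesis using eE by (simp add: cut_def)
      qed
      have Rpos: "Rcut E r C > 0"
      proof -
        have "finite (cut E C)" using finE by (simp add: cut_def)
        moreover have "\<forall>e'\<in>cut E C. 0 \<le> 1 / r e'" using rpos by (auto simp: cut_def less_imp_le)
        ultimately have "0 < (\<Sum>e'\<in>cut E C. 1 / r e')"
          apply (intro sum_pos2[OF _ ecut]) using re by auto
        then show ?thesis by (simp add: Rcut_def)
      qed
      have ah: "f h t = - f t h" using bf eE th(1) unfolding is_bflow_def by blast
      have diff: "(edge_val f e - ?d e / r e)^2 = (bset b C - fset V E r x C)^2"
      proof -
        from orient_cases[OF th(2)] th(1)
        have "orient e = (t,h) \<or> orient e = (h,t)" by simp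
        then show ?thesis
        proof
          assume "orient e = (t,h)" then show ?thesis using val by (simp add: edge_val_def)
        next
          assume "orient e = (h,t)"
          then have "edge_val f e - ?d e / r e = - (bset b C - fset V E r x C)"
            using val ah re by (simp add: edge_val_def field_simps)
          then show ?thesis by (simp only: power2_minus)
        qed
      qed
      have "?F e = r e * (bset b C - fset V E r x C)^2"
        using Rpos unfolding tC Delta_def by (simp add: field_simps power2_eq_square)
      then show ?thesis using True diff by simp
    qed
  qed
  also have "\<dots> = (\<Sum>e\<in>T. 1/2 * ?F e)"
  proof -
    have "(\<Sum>e\<in>E. if e \<in> T then 1/2 * ?F e else 0) = (\<Sum>e\<in>E \<inter> T. 1/2 * ?F e)"
      by (rule sum.inter_restrict[OF finE, symmetric])
    also have "E \<inter> T = T" using TE by blast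
    finally show ?thesis .
  qed
  also have "\<dots> = 1/2 * (\<Sum>e\<in>T. ?F e)" by (simp add: sum_distrib_left)
  finally show ?thesis unfolding f_def .
qed

end
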